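(* Let $p$ be a prime, $e\ge2$ and $r\ge2$ integers, and let $R$ be a ring of characteristic $p^{r+1}$. Then there is an $R$-ring automorphism $\alpha$ of the polynomial ring $R[x]$ (fixing $R$ elementwise) with $\alpha(x)=x+px^e$, and $\alpha$ has order exactly $p^r$. Consequently $x^{p^r}$ and $y^{p^r}$ are central elements of the Ore extension $R[x][y;\alpha]$ (in which $yf=\alpha(f)y$ for $f\in R[x]$).
   Context: $R[x]$ is the ordinary polynomial ring with $x$ central. $R[x][y;\alpha]$ is the free left $R[x]$-module on $\{y^n:n\in\mathbb N\}$ with multiplication determined by $yf=\alpha(f)y$. *)

theory Defs
  imports Main "HOL-Library.Poly_Mapping" "HOL-Computational_Algebra.Primes"
begin

text \<open>The polynomial ring R[x] over a (not necessarily commutative) ring R, x central: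
  finitely supported coefficient functions with convolution product.\<close>
type_synonym 'a upoly = "nat \<Rightarrow>\<^sub>0 'a"

definition pX :: "'a::ring_1 upoly" where
  "pX = Poly_Mapping.single 1 1"

definition pC :: "'a::ring_1 \<Rightarrow> 'a upoly" where
  "pC c = Poly_Mapping.single 0 c"

definition R_ring_automorphism :: "('a::ring_1 upoly \<Rightarrow> 'a upoly) \<Rightarrow> bool" where
  "R_ring_automorphism \<alpha> \<longleftrightarrow> bij \<alpha>
     \<and> (\<forall>f g. \<alpha> (f + g) = \<alpha> f + \<alpha> g)
     \<and> (\<forall>f g. \<alpha> (f * g) = \<alpha> f * \<alpha> g)
     \<and> \<alpha> 1 = 1
     \<and> (\<forall>c. \<alpha> (pC c) = pC c)"

text \<open>Ore extension R[x][y;\<alpha>]: free left R[x]-module on y^n, an element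
  \<Sum> f_n y^n is the finitely supported map n \<mapsto> f_n; product determined by
  (f y^m)(g y^n) = f \<alpha>^m(g) y^(m+n).\<close>
type_synonym 'a ore = "nat \<Rightarrow>\<^sub>0 'a upoly"

definition ore_mult :: "('a::ring_1 upoly \<Rightarrow> 'a upoly) \<Rightarrow> 'a ore \<Rightarrow> 'a ore \<Rightarrow> 'a ore" where
  "ore_mult \<alpha> P Q = (\<Sum>m\<in>Poly_Mapping.keys P. \<Sum>n\<in>Poly_Mapping.keys Q.
      Poly_Mapping.single (m + n) (Poly_Mapping.lookup P m * (\<alpha> ^^ m) (Poly_Mapping.lookup Q n)))"

definition ore_central :: "('a::ring_1 upoly \<Rightarrow> 'a upoly) \<Rightarrow> 'a ore \<Rightarrow> bool" where
  "ore_central \<alpha> Z \<longleftrightarrow> (\<forall>Q. ore_mult \<alpha> Z Q = ore_mult \<alpha> Q Z)"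

definition ore_y :: "'a::ring_1 ore" where
  "ore_y = Poly_Mapping.single 1 1"

definition ore_of_poly :: "'a::ring_1 upoly \<Rightarrow> 'a ore" where
  "ore_of_poly f = Poly_Mapping.single 0 f"

end

theory Submission
  imports Defs
begin


lemma nt_binom:
  fixes p r j :: nat
  assumes p: "prime p" and j1: "1 \<le> j" and jr: "j \<le> p ^ r"
  shows "p ^ (r + 1) dvd (p ^ r choose j) * p ^ j"
proof -
  define a where "a = multiplicity p j"
  have p1: "p > 1" using p prime_gt_1_nat by blast
  obtain b where jb: "j = p ^ a * b" and nb: "\<not> p dvd b"
    using multiplicity_decompose'[of j p] j1 p unfolding a_def
    by (metis not_one_le_zero not_prime_unit)
  have b1: "b \<ge> 1" using jb j1 by (cases b) auto
  have "p ^ a \<le> j" using jb b1 by simp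
  hence "p ^ a \<le> p ^ r" using jr by simp
  hence ar: "a \<le> r" using p1 power_le_imp_le_exp by blast
  have "j * (p ^ r choose j) = p ^ r * ((p ^ r - 1) choose (j - 1))"
    using times_binomial_minus1_eq j1 by simp
  hence "p ^ a * (b * (p ^ r choose j)) = p ^ a * (p ^ (r - a) * ((p ^ r - 1) choose (j - 1)))"
    using jb ar by (simp add: mult.assoc power_add[symmetric])
  hence "b * (p ^ r choose j) = p ^ (r - a) * ((p ^ r - 1) choose (j - 1))"
    using p1 by simp
  hence "p ^ (r - a) dvd b * (p ^ r choose j)" by simp
  moreover have "coprime (p ^ (r - a)) b"
    using nb p by (simp add: prime_imp_coprime)
  ultimately have d: "p ^ (r - a) dvd (p ^ r choose j)"
    using coprime_dvd_mult_right_iff by blast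
  have "a < 2 ^ a" by (rule less_exp)
  also have "2 ^ a \<le> p ^ a" using p1 by (simp add: power_mono)
  also have "p ^ a \<le> j" by fact
  finally have "r + 1 \<le> (r - a) + j" using ar by simp
  hence "p ^ (r + 1) dvd p ^ ((r - a) + j)" by (rule le_imp_power_dvd)
  also have "p ^ ((r - a) + j) dvd (p ^ r choose j) * p ^ j"
    using d by (simp add: power_add mult_dvd_mono)
  finally show ?thesis .
qed


lemma pascal_sum:
  fixes a :: "nat \<Rightarrow> 'b::ring_1"
  shows "(\<Sum>j\<le>n. of_nat (n choose j) * a j) + (\<Sum>j\<le>n. of_nat (n choose j) * a (Suc j))
       = (\<Sum>j\<le>Suc n. of_nat (Suc n choose j) * a j)"
proof -
  have A: "(\<Sum>j\<le>n. of_nat (n choose j) * a j) = (\<Sum>j\<le>Suc n. of_nat (n choose j) * a j)"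
    by (simp add: binomial_eq_0)
  also have "\<dots> = a 0 + (\<Sum>j\<le>n. of_nat (n choose Suc j) * a (Suc j))"
    by (subst sum.atMost_Suc_shift) simp
  finally have A': "(\<Sum>j\<le>n. of_nat (n choose j) * a j) = a 0 + (\<Sum>j\<le>n. of_nat (n choose Suc j) * a (Suc j))" .
  have "(\<Sum>j\<le>Suc n. of_nat (Suc n choose j) * a j) = a 0 + (\<Sum>j\<le>n. of_nat (Suc n choose Suc j) * a (Suc j))"
    by (subst sum.atMost_Suc_shift) simp
  also have "\<dots> = a 0 + (\<Sum>j\<le>n. of_nat (n choose j) * a (Suc j) + of_nat (n choose Suc j) * a (Suc j))"
    by (simp add: distrib_right)
  also have "\<dots> = a 0 + (\<Sum>j\<le>n. of_nat (n choose Suc j) * a (Suc j)) + (\<Sum>j\<le>n. of_nat (n choose j) * a (Suc j))"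
    by (simp add: sum.distrib algebra_simps)
  finally show ?thesis using A' by simp
qed

lemma funpow_additive:
  fixes \<beta> :: "'b::ring_1 \<Rightarrow> 'b"
  assumes add: "\<And>f g. \<beta> (f + g) = \<beta> f + \<beta> g"
  shows "(\<beta> ^^ n) (f + g) = (\<beta> ^^ n) f + (\<beta> ^^ n) g"
  by (induction n) (simp_all add: add)

lemma binom_op:
  fixes \<beta> :: "'b::ring_1 \<Rightarrow> 'b"
  assumes add: "\<And>f g. \<beta> (f + g) = \<beta> f + \<beta> g"
  shows "(\<beta> ^^ n) f = (\<Sum>j\<le>n. of_nat (n choose j) * (((\<lambda>g. \<beta> g - g) ^^ j) f))"
proof (induction n arbitrary: f)
  case 0
  then show ?case by simp
next
  case (Suc n)
  let ?D = "\<lambda>g. \<beta> g - g"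
  have "(\<beta> ^^ Suc n) f = (\<beta> ^^ n) (f + ?D f)"
    by (simp add: funpow_Suc_right del: funpow.simps)
  also have "\<dots> = (\<beta> ^^ n) f + (\<beta> ^^ n) (?D f)"
    by (rule funpow_additive[OF add])
  also have "\<dots> = (\<Sum>j\<le>n. of_nat (n choose j) * ((?D ^^ j) f)) + (\<Sum>j\<le>n. of_nat (n choose j) * ((?D ^^ Suc j) f))"
    by (simp add: Suc.IH funpow_Suc_right del: funpow.simps)
  also have "\<dots> = (\<Sum>j\<le>Suc n. of_nat (Suc n choose j) * ((?D ^^ j) f))"
    by (rule pascal_sum)
  finally show ?case .
qed

lemma delta_pow_div:
  fixes \<beta> :: "'b::ring_1 \<Rightarrow> 'b"
  assumes add: "\<And>f g. \<beta> (f + g) = \<beta> f + \<beta> g"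
    and scal: "\<And>c f. \<beta> (of_nat c * f) = of_nat c * \<beta> f"
    and dv: "\<And>f. \<exists>g. \<beta> f - f = of_nat q * g"
  shows "\<exists>g. ((\<lambda>g. \<beta> g - g) ^^ j) f = of_nat (q ^ j) * g"
proof (induction j)
  case 0
  then show ?case by (intro exI[of _ f]) simp
next
  case (Suc j)
  then obtain g where g: "((\<lambda>g. \<beta> g - g) ^^ j) f = of_nat (q ^ j) * g" by blast
  obtain h where h: "\<beta> g - g = of_nat q * h" using dv by blast
  have "((\<lambda>g. \<beta> g - g) ^^ Suc j) f = \<beta> (of_nat (q ^ j) * g) - of_nat (q ^ j) * g"
    using g by simp
  also have "\<dots> = of_nat (q ^ j) * (\<beta> g - g)" using scal[of "q ^ j" g] by (simp add: algebra_simps)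
  also have "\<dots> = of_nat (q ^ Suc j) * h" by (simp only: h of_nat_mult power_Suc2 mult.assoc)
  finally show ?case by blast
qed

lemma period_op:
  fixes \<beta> :: "'b::ring_1 \<Rightarrow> 'b" and p r :: nat
  assumes p: "prime p"
    and add: "\<And>f g. \<beta> (f + g) = \<beta> f + \<beta> g"
    and scal: "\<And>c f. \<beta> (of_nat c * f) = of_nat c * \<beta> f"
    and dv: "\<And>f. \<exists>g. \<beta> f - f = of_nat p * g"
    and ch: "of_nat (p ^ (r + 1)) = (0::'b)"
  shows "(\<beta> ^^ (p ^ r)) f = f"
proof -
  let ?D = "\<lambda>g. \<beta> g - g"
  let ?t = "\<lambda>j. of_nat (p ^ r choose j) * ((?D ^^ j) f)"
  have z: "?t j = 0" if "j \<in> {..p ^ r} - {0}" for j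
  proof -
    from that have j: "1 \<le> j" "j \<le> p ^ r" by auto
    obtain g where g: "(?D ^^ j) f = of_nat (p ^ j) * g"
      using delta_pow_div[OF add scal dv] by blast
    obtain k where k: "(p ^ r choose j) * p ^ j = p ^ (r + 1) * k"
      using nt_binom[OF p j] by (elim dvdE)
    have "?t j = of_nat ((p ^ r choose j) * p ^ j) * g"
      by (simp add: g mult.assoc)
    also have "\<dots> = 0" by (simp only: k of_nat_mult ch mult_zero_left)
    finally show ?thesis .
  qed
  have "(\<beta> ^^ (p ^ r)) f = (\<Sum>j\<le>p ^ r. ?t j)"
    by (rule binom_op[OF add])
  also have "\<dots> = (\<Sum>j\<in>{0}. ?t j)"
    by (rule sum.mono_neutral_right) (use z in auto)
  also have "\<dots> = f" by simp
  finally show ?thesis .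
qed



lemma pm_expand_superset:
  fixes f :: "'a::ring_1 upoly"
  assumes "finite K" "Poly_Mapping.keys f \<subseteq> K"
  shows "f = (\<Sum>i\<in>K. Poly_Mapping.single i (Poly_Mapping.lookup f i))"
proof (rule poly_mapping_eqI)
  fix k
  have "Poly_Mapping.lookup (\<Sum>i\<in>K. Poly_Mapping.single i (Poly_Mapping.lookup f i)) k
      = (\<Sum>i\<in>K. (Poly_Mapping.lookup f i when i = k))"
    by (simp add: lookup_sum lookup_single)
  also have "\<dots> = (\<Sum>i\<in>K. (if i = k then Poly_Mapping.lookup f k else 0))"
    by (rule sum.cong) auto
  also have "\<dots> = Poly_Mapping.lookup f k"
    using assms by (auto simp: sum.delta in_keys_iff)
  finally show "Poly_Mapping.lookup f k = Poly_Mapping.lookup (\<Sum>i\<in>K. Poly_Mapping.single i (Poly_Mapping.lookup f i)) k" by simp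
qed

lemma pm_expand:
  fixes f :: "'a::ring_1 upoly"
  shows "f = (\<Sum>i\<in>Poly_Mapping.keys f. Poly_Mapping.single i (Poly_Mapping.lookup f i))"
  by (rule pm_expand_superset) auto

lemma pX_pow: "(pX :: 'a::ring_1 upoly) ^ i = Poly_Mapping.single i 1"
  by (induction i) (simp_all add: pX_def mult_single)

lemma single_pC: "Poly_Mapping.single i c = pC c * (pX :: 'a::ring_1 upoly) ^ i"
  by (simp add: pX_pow pC_def mult_single)

lemma pC_mult: "pC (a * b) = pC a * (pC b :: 'a::ring_1 upoly)"
  by (simp add: pC_def mult_single)

lemma pC_add: "pC (a + b) = pC a + (pC b :: 'a::ring_1 upoly)"
  by (simp add: pC_def single_add)

lemma pC_0 [simp]: "pC 0 = (0 :: 'a::ring_1 upoly)"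
  by (simp add: pC_def)

lemma pC_1 [simp]: "pC 1 = (1 :: 'a::ring_1 upoly)"
  by (simp add: pC_def)

lemma pC_of_nat: "pC (of_nat n) = (of_nat n :: 'a::ring_1 upoly)"
  by (simp add: pC_def)

lemma pX_central: "(pX :: 'a::ring_1 upoly) * f = f * pX"
proof -
  have "pX * f = (\<Sum>i\<in>Poly_Mapping.keys f. pX * Poly_Mapping.single i (Poly_Mapping.lookup f i))"
    by (subst pm_expand[of f]) (simp add: sum_distrib_left)
  also have "\<dots> = (\<Sum>i\<in>Poly_Mapping.keys f. Poly_Mapping.single i (Poly_Mapping.lookup f i) * pX)"
    by (rule sum.cong) (simp_all add: pX_def mult_single add.commute)
  also have "\<dots> = f * pX"
    by (subst (2) pm_expand[of f]) (simp add: sum_distrib_right)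
  finally show ?thesis .
qed

lemma pXpow_central: "(pX :: 'a::ring_1 upoly) ^ k * f = f * pX ^ k"
  by (metis pX_central power_commuting_commutes)

definition central :: "'b::ring_1 \<Rightarrow> bool" where
  "central z \<longleftrightarrow> (\<forall>f. z * f = f * z)"

lemma central_pXpow: "central ((pX :: 'a::ring_1 upoly) ^ k)"
  using pXpow_central central_def by blast

lemma central_of_nat: "central (of_nat n :: 'b::ring_1)"
  by (simp add: central_def mult_of_nat_commute)

lemma central_mult: "central a \<Longrightarrow> central b \<Longrightarrow> central (a * b)"
  unfolding central_def
proof (intro allI)
  fix f assume a: "\<forall>f. a * f = f * a" and b: "\<forall>f. b * f = f * b"
  have "a * b * f = a * (f * b)" using b by (simp add: mult.assoc)
  also have "\<dots> = (f * a) * b" using a by (simp flip: mult.assoc)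
  finally show "a * b * f = f * (a * b)" by (simp add: mult.assoc)
qed

lemma central_add: "central a \<Longrightarrow> central b \<Longrightarrow> central (a + b)"
  by (simp add: central_def algebra_simps)

lemma central_1: "central (1::'b::ring_1)"
  by (simp add: central_def)

lemma central_power: "central a \<Longrightarrow> central (a ^ n)"
  by (induction n) (simp_all add: central_1 central_mult)

lemma central_reorder:
  assumes P: "central P" and X: "central X"
  shows "a * (P * (X * Y)) = P * (X * (a * Y))"
proof -
  have "a * (P * (X * Y)) = (a * P) * (X * Y)" by (simp add: mult.assoc)
  also have "\<dots> = P * ((a * X) * Y)" using P unfolding central_def by (simp add: mult.assoc)
  also have "\<dots> = P * (X * (a * Y))" using X unfolding central_def by (simp add: mult.assoc)
  finally show ?thesis .
qed

lemma central_power_mult: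
  assumes "central a" shows "(a * b) ^ n = a ^ n * b ^ n"
proof (induction n)
  case 0 then show ?case by simp
next
  case (Suc n)
  have c: "central (a ^ n)" using assms central_power by blast
  have "(a * b) ^ Suc n = a * b * (a ^ n * b ^ n)" by (simp add: Suc)
  also have "\<dots> = a * (b * a ^ n) * b ^ n" by (simp add: mult.assoc)
  also have "\<dots> = a * a ^ n * (b * b ^ n)" using c unfolding central_def by (simp add: mult.assoc)
  finally show ?case by simp
qed

definition subst :: "'a::ring_1 upoly \<Rightarrow> 'a upoly \<Rightarrow> 'a upoly" where
  "subst s f = (\<Sum>i\<in>Poly_Mapping.keys f. pC (Poly_Mapping.lookup f i) * s ^ i)"

lemma subst_superset:
  assumes "finite K" "Poly_Mapping.keys f \<subseteq> K"
  shows "subst s f = (\<Sum>i\<in>K. pC (Poly_Mapping.lookup f i) * s ^ i)"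
  unfolding subst_def
  by (rule sum.mono_neutral_left) (use assms in \<open>auto simp: in_keys_iff\<close>)

lemma subst_add: "subst s (f + g) = subst s f + subst s g"
proof -
  let ?K = "Poly_Mapping.keys f \<union> Poly_Mapping.keys g"
  have k: "Poly_Mapping.keys (f + g) \<subseteq> ?K" by (rule keys_add)
  have "subst s (f + g) = (\<Sum>i\<in>?K. pC (Poly_Mapping.lookup (f + g) i) * s ^ i)"
    by (rule subst_superset) (use k in auto)
  also have "\<dots> = (\<Sum>i\<in>?K. pC (Poly_Mapping.lookup f i) * s ^ i) + (\<Sum>i\<in>?K. pC (Poly_Mapping.lookup g i) * s ^ i)"
    by (simp add: lookup_add pC_add distrib_right sum.distrib)
  also have "\<dots> = subst s f + subst s g"
    by (simp add: subst_superset[symmetric])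
  finally show ?thesis .
qed

lemma subst_0 [simp]: "subst s 0 = 0"
  by (simp add: subst_def)

lemma subst_sum: "subst s (\<Sum>i\<in>A. F i) = (\<Sum>i\<in>A. subst s (F i))"
  by (induction A rule: infinite_finite_induct) (simp_all add: subst_add)

lemma subst_single: "subst s (Poly_Mapping.single i c) = pC c * s ^ i"
  by (subst subst_superset[of "{i}"]) auto

lemma subst_mult:
  assumes cs: "central s"
  shows "subst s (f * g) = subst s f * subst s g"
proof -
  let ?F = "Poly_Mapping.keys f" and ?G = "Poly_Mapping.keys g"
  let ?f = "Poly_Mapping.lookup f" and ?g = "Poly_Mapping.lookup g"
  have "f * g = (\<Sum>i\<in>?F. Poly_Mapping.single i (?f i)) * (\<Sum>j\<in>?G. Poly_Mapping.single j (?g j))"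
    by (simp add: pm_expand[symmetric])
  also have "\<dots> = (\<Sum>i\<in>?F. \<Sum>j\<in>?G. Poly_Mapping.single (i + j) (?f i * ?g j))"
    by (simp add: sum_distrib_left sum_distrib_right mult_single) (rule sum.swap)
  finally have fg: "f * g = \<dots>" .
  have cp: "central (s ^ i)" for i using cs central_power by blast
  have "subst s (f * g) = (\<Sum>i\<in>?F. \<Sum>j\<in>?G. pC (?f i * ?g j) * s ^ (i + j))"
    by (simp add: fg subst_sum subst_single)
  also have "\<dots> = (\<Sum>i\<in>?F. \<Sum>j\<in>?G. (pC (?f i) * s ^ i) * (pC (?g j) * s ^ j))"
  proof (intro sum.cong refl)
    fix i j
    have "s ^ i * pC (?g j) = pC (?g j) * s ^ i" using cp unfolding central_def by blast
    then show "pC (?f i * ?g j) * s ^ (i + j) = (pC (?f i) * s ^ i) * (pC (?g j) * s ^ j)"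
      by (simp add: pC_mult power_add mult.assoc) (metis mult.assoc)
  qed
  also have "\<dots> = subst s f * subst s g"
    by (simp add: subst_def sum_distrib_left sum_distrib_right) (rule sum.swap)
  finally show ?thesis .
qed

lemma subst_pC [simp]: "subst s (pC c) = pC c"
  by (simp add: pC_def subst_single)

lemma subst_1 [simp]: "subst s 1 = 1"
  using subst_pC[of s 1] by simp

lemma subst_pX [simp]: "subst s pX = s"
  by (simp add: pX_def subst_single)

lemma subst_of_nat_mult:
  assumes "central s"
  shows "subst s (of_nat c * f) = of_nat c * subst s f"
  using subst_mult[OF assms] subst_pC[of s "of_nat c"] by (simp add: pC_of_nat)

lemma subst_power:
  assumes "central s"
  shows "subst s (f ^ n) = subst s f ^ n"
  by (induction n) (simp_all add: subst_mult[OF assms])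

lemma lookup_pXpow_mult:
  assumes "i < k"
  shows "Poly_Mapping.lookup ((pX :: 'a::ring_1 upoly) ^ k * h) i = 0"
proof -
  have "pX ^ k * h = (\<Sum>j\<in>Poly_Mapping.keys h. Poly_Mapping.single (k + j) (Poly_Mapping.lookup h j))"
    by (subst pm_expand[of h]) (simp add: sum_distrib_left pX_pow mult_single)
  then show ?thesis using assms by (simp add: lookup_sum lookup_single)
qed

lemma lookup_of_nat_mult:
  "Poly_Mapping.lookup (of_nat c * (f :: 'a::ring_1 upoly)) i = of_nat c * Poly_Mapping.lookup f i"
proof -
  have "of_nat c * f = (\<Sum>j\<in>Poly_Mapping.keys f. Poly_Mapping.single j (of_nat c * Poly_Mapping.lookup f j))"
    by (subst pm_expand[of f]) (simp add: sum_distrib_left mult_single flip: single_of_nat)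
  then show ?thesis
    by (simp add: lookup_sum lookup_single when_def sum_distrib_left[symmetric] in_keys_iff)
qed



definition tt :: "nat \<Rightarrow> nat \<Rightarrow> 'a::ring_1 upoly" where
  "tt p e = 1 + of_nat p * pX ^ (e - 1)"

definition ss :: "nat \<Rightarrow> nat \<Rightarrow> 'a::ring_1 upoly" where
  "ss p e = pX + of_nat p * pX ^ e"

lemma central_tt: "central (tt p e)"
  unfolding tt_def by (intro central_add central_mult central_1 central_of_nat central_pXpow)

lemma central_ss: "central (ss p e)"
  unfolding ss_def using central_pXpow[of 1]
  by (intro central_add central_mult central_of_nat central_pXpow) simp_all

lemma ss_eq:
  assumes "e \<ge> 1"
  shows "(ss p e :: 'a::ring_1 upoly) = pX * tt p e"
proof -
  have "pX * (of_nat p * pX ^ (e - 1)) = of_nat p * (pX * pX ^ (e - 1) :: 'a upoly)"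
    by (simp add: mult.assoc[symmetric] pX_central[of "of_nat p"] flip: mult_of_nat_commute)
  also have "pX * pX ^ (e - 1) = (pX ^ e :: 'a upoly)"
    using assms by (simp flip: power_Suc)
  finally show ?thesis by (simp add: ss_def tt_def distrib_left)
qed

lemma D1:
  assumes e: "e \<ge> 1"
  shows "\<exists>w. (ss p e :: 'a::ring_1 upoly) ^ i - pX ^ i = of_nat p * (pX ^ (i + (e - 1)) * w)"
proof (induction i)
  case 0 then show ?case by (intro exI[of _ 0]) simp
next
  case (Suc i)
  let ?P = "of_nat p :: 'a upoly"
  from Suc obtain w where w: "(ss p e :: 'a upoly) ^ i - pX ^ i = ?P * (pX ^ (i + (e - 1)) * w)" by blast
  have "(ss p e :: 'a upoly) ^ Suc i - pX ^ Suc i = (ss p e ^ i - pX ^ i) * ss p e + pX ^ i * (ss p e - pX)"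
    by (simp only: power_Suc2) (simp add: algebra_simps)
  also have "\<dots> = ?P * (pX ^ (i + (e - 1)) * w) * (pX * tt p e) + pX ^ i * (?P * pX ^ e)"
  proof -
    have s1: "ss p e - pX = ?P * pX ^ e" by (simp add: ss_def)
    show ?thesis by (simp only: w s1) (simp only: ss_eq[OF e])
  qed
  also have "?P * (pX ^ (i + (e - 1)) * w) * (pX * tt p e) = ?P * (pX ^ (i + (e - 1)) * (w * pX) * tt p e)"
    by (simp add: mult.assoc)
  also have "\<dots> = ?P * (pX ^ (i + (e - 1)) * (pX * w) * tt p e)"
    by (simp add: pX_central)
  also have "\<dots> = ?P * (pX ^ (Suc i + (e - 1)) * (w * tt p e))"
    by (simp only: mult.assoc power_Suc2 power_add[symmetric] add_Suc)
  also have "pX ^ i * (?P * pX ^ e) = ?P * (pX ^ i * pX ^ e)"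
    by (simp add: mult.assoc[symmetric] flip: mult_of_nat_commute)
  also have "pX ^ i * pX ^ e = (pX ^ (Suc i + (e - 1)) * 1 :: 'a upoly)"
    using e by (simp add: power_add[symmetric])
  finally have "(ss p e :: 'a upoly) ^ Suc i - pX ^ Suc i = ?P * (pX ^ (Suc i + (e - 1)) * (w * tt p e + 1))"
    by (simp add: distrib_left)
  then show ?case by blast
qed

lemma D2:
  assumes e: "e \<ge> 1" and low: "\<And>i. i < m \<Longrightarrow> Poly_Mapping.lookup f i = 0"
  shows "\<exists>u. subst (ss p e) f - (f :: 'a::ring_1 upoly) = of_nat p * (pX ^ (m + (e - 1)) * u)"
proof -
  let ?P = "of_nat p :: 'a upoly"
  let ?K = "Poly_Mapping.keys f" and ?f = "Poly_Mapping.lookup f"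
  have "\<forall>i. \<exists>w. (ss p e :: 'a upoly) ^ i - pX ^ i = ?P * (pX ^ (i + (e - 1)) * w)"
    using D1[OF e] by blast
  then have "\<exists>w. \<forall>i. (ss p e :: 'a upoly) ^ i - pX ^ i = ?P * (pX ^ (i + (e - 1)) * w i)"
    by (rule choice)
  then obtain w where w: "\<And>i. (ss p e :: 'a upoly) ^ i - pX ^ i = ?P * (pX ^ (i + (e - 1)) * w i)"
    by blast
  have "subst (ss p e) f - f = (\<Sum>i\<in>?K. pC (?f i) * ss p e ^ i) - (\<Sum>i\<in>?K. pC (?f i) * pX ^ i)"
    by (subst (3) pm_expand) (simp add: subst_def single_pC)
  also have "\<dots> = (\<Sum>i\<in>?K. pC (?f i) * (ss p e ^ i - pX ^ i))"
    by (simp add: sum_subtractf right_diff_distrib)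
  also have "\<dots> = (\<Sum>i\<in>?K. ?P * (pX ^ (m + (e - 1)) * (pC (?f i) * (pX ^ (i - m) * w i))))"
  proof (rule sum.cong[OF refl])
    fix i assume "i \<in> ?K"
    hence im: "m \<le> i" using low by (metis in_keys_iff not_le)
    have "pC (?f i) * (ss p e ^ i - pX ^ i) = pC (?f i) * (?P * (pX ^ (m + (e - 1)) * (pX ^ (i - m) * w i)))"
    proof -
      have ex: "i + (e - 1) = (m + (e - 1)) + (i - m)" using im by simp
      have "(pX :: 'a upoly) ^ (i + (e - 1)) = pX ^ (m + (e - 1)) * pX ^ (i - m)"
        unfolding ex by (rule power_add)
      then show ?thesis by (simp add: w mult.assoc)
    qed
    also have "\<dots> = ?P * (pX ^ (m + (e - 1)) * (pC (?f i) * (pX ^ (i - m) * w i)))"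
      by (rule central_reorder[OF central_of_nat central_pXpow])
    finally show "pC (?f i) * (ss p e ^ i - pX ^ i) = ?P * (pX ^ (m + (e - 1)) * (pC (?f i) * (pX ^ (i - m) * w i)))" .
  qed
  also have "\<dots> = ?P * (pX ^ (m + (e - 1)) * (\<Sum>i\<in>?K. pC (?f i) * (pX ^ (i - m) * w i)))"
    by (simp add: sum_distrib_left)
  finally show ?thesis by blast
qed

lemma D3:
  assumes e: "e \<ge> 1"
  shows "\<exists>g. subst (ss p e) f - (f :: 'a::ring_1 upoly) = of_nat p * g"
  using D2[OF e, of 0 f p] by auto

lemma D4:
  assumes e: "e \<ge> 1"
  shows "\<exists>u. ((\<lambda>g. subst (ss p e) g - g) ^^ j) (pX :: 'a::ring_1 upoly) = pX ^ (1 + j * (e - 1)) * u"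
proof (induction j)
  case 0 then show ?case by (intro exI[of _ 1]) simp
next
  case (Suc j)
  then obtain u where u: "((\<lambda>g. subst (ss p e) g - g) ^^ j) (pX :: 'a upoly) = pX ^ (1 + j * (e - 1)) * u" by blast
  have low: "Poly_Mapping.lookup (pX ^ (1 + j * (e - 1)) * u) i = 0" if "i < 1 + j * (e - 1)" for i
    using lookup_pXpow_mult that by blast
  obtain v where v: "subst (ss p e) (pX ^ (1 + j * (e - 1)) * u) - pX ^ (1 + j * (e - 1)) * u
       = of_nat p * (pX ^ ((1 + j * (e - 1)) + (e - 1)) * v)"
    using D2[OF e low] by blast
  have "((\<lambda>g. subst (ss p e) g - g) ^^ Suc j) (pX :: 'a upoly) = of_nat p * (pX ^ ((1 + j * (e - 1)) + (e - 1)) * v)"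
    using u v by simp
  also have "\<dots> = pX ^ (1 + Suc j * (e - 1)) * (of_nat p * v)"
  proof -
    have ex: "(1 + j * (e - 1)) + (e - 1) = 1 + Suc j * (e - 1)" by simp
    show ?thesis unfolding ex by (simp add: mult.assoc[symmetric] flip: mult_of_nat_commute)
  qed
  finally show ?case by blast
qed



lemma coef_lemma:
  assumes e: "e \<ge> 2"
  shows "Poly_Mapping.lookup ((subst (ss p e) ^^ n) (pX :: 'a::ring_1 upoly)) e = of_nat n * of_nat p"
proof -
  let ?D = "\<lambda>g. subst (ss p e) g - (g :: 'a upoly)"
  let ?c = "\<lambda>j. Poly_Mapping.lookup ((?D ^^ j) pX) e"
  have e1: "e \<ge> 1" using e by simp
  have c: "?c j = (if j = 1 then of_nat p else 0)" for j
  proof (cases "j \<ge> 2")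
    case True
    obtain u where u: "(?D ^^ j) pX = pX ^ (1 + j * (e - 1)) * u" using D4[OF e1, of j p] by blast
    have "e < 1 + j * (e - 1)"
    proof -
      have "2 * (e - 1) \<le> j * (e - 1)" using True by simp
      then show ?thesis using e by linarith
    qed
    then show ?thesis using True by (simp only: u lookup_pXpow_mult) simp
  next
    case False
    then consider "j = 0" | "j = 1" by linarith
    then show ?thesis
    proof cases
      case 1 then show ?thesis using e by (simp add: pX_def lookup_single)
    next
      case 2
      have "?c j = Poly_Mapping.lookup (of_nat p * pX ^ e :: 'a upoly) e"
        using 2 by (simp add: ss_def)
      also have "\<dots> = of_nat p" by (simp add: lookup_of_nat_mult pX_pow)
      finally show ?thesis using 2 by simp
    qed
  qed
  have "(subst (ss p e) ^^ n) (pX :: 'a upoly) = (\<Sum>j\<le>n. of_nat (n choose j) * ((?D ^^ j) pX))"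
    by (rule binom_op) (rule subst_add)
  then have "Poly_Mapping.lookup ((subst (ss p e) ^^ n) (pX :: 'a upoly)) e
      = (\<Sum>j\<le>n. of_nat (n choose j) * ?c j)"
    by (simp add: lookup_sum lookup_of_nat_mult)
  also have "\<dots> = (\<Sum>j\<le>n. if j = 1 then of_nat (n choose 1) * of_nat p else 0)"
    by (rule sum.cong) (simp_all add: c)
  also have "\<dots> = of_nat n * of_nat p"
    by (cases n) auto
  finally show ?thesis .
qed

lemma funpow_mult_left: "((\<lambda>f. a * f) ^^ n) (1 :: 'b::ring_1) = a ^ n"
  by (induction n) simp_all

lemma ore_mult_superset:
  assumes "finite K" "Poly_Mapping.keys P \<subseteq> K" "finite L" "Poly_Mapping.keys Q \<subseteq> L"
    and z: "\<And>m. (\<alpha> ^^ m) 0 = 0"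
  shows "ore_mult \<alpha> P Q = (\<Sum>m\<in>K. \<Sum>n\<in>L. Poly_Mapping.single (m + n)
            (Poly_Mapping.lookup P m * (\<alpha> ^^ m) (Poly_Mapping.lookup Q n)))"
proof -
  have "ore_mult \<alpha> P Q = (\<Sum>m\<in>Poly_Mapping.keys P. \<Sum>n\<in>L. Poly_Mapping.single (m + n)
            (Poly_Mapping.lookup P m * (\<alpha> ^^ m) (Poly_Mapping.lookup Q n)))"
    unfolding ore_mult_def
    by (intro sum.cong refl sum.mono_neutral_left) (use assms in \<open>auto simp: in_keys_iff\<close>)
  also have "\<dots> = (\<Sum>m\<in>K. \<Sum>n\<in>L. Poly_Mapping.single (m + n)
            (Poly_Mapping.lookup P m * (\<alpha> ^^ m) (Poly_Mapping.lookup Q n)))"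
    by (intro sum.mono_neutral_left) (use assms in \<open>auto simp: in_keys_iff\<close>)
  finally show ?thesis .
qed

lemma ore_central_single:
  assumes cX: "central X" and fx: "\<And>m. (\<alpha> ^^ m) X = X" and per: "\<alpha> ^^ N = id"
    and z: "\<And>m. (\<alpha> ^^ m) 0 = 0"
  shows "ore_central \<alpha> (Poly_Mapping.single N (X :: 'a::ring_1 upoly))"
  unfolding ore_central_def
proof
  fix Q :: "'a ore"
  let ?Z = "Poly_Mapping.single N X"
  have kz: "Poly_Mapping.keys ?Z \<subseteq> {N}" by simp
  have "ore_mult \<alpha> ?Z Q = (\<Sum>m\<in>{N}. \<Sum>n\<in>Poly_Mapping.keys Q. Poly_Mapping.single (m + n)
            (Poly_Mapping.lookup ?Z m * (\<alpha> ^^ m) (Poly_Mapping.lookup Q n)))"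
    by (rule ore_mult_superset) (use kz z in auto)
  also have "\<dots> = (\<Sum>n\<in>Poly_Mapping.keys Q. Poly_Mapping.single (N + n) (X * Poly_Mapping.lookup Q n))"
    by (simp add: per)
  also have "\<dots> = (\<Sum>n\<in>Poly_Mapping.keys Q. Poly_Mapping.single (n + N) (Poly_Mapping.lookup Q n * X))"
    using cX by (simp add: central_def add.commute)
  also have "\<dots> = (\<Sum>m\<in>Poly_Mapping.keys Q. \<Sum>n\<in>{N}. Poly_Mapping.single (m + n)
            (Poly_Mapping.lookup Q m * (\<alpha> ^^ m) (Poly_Mapping.lookup ?Z n)))"
    by (simp add: fx)
  also have "\<dots> = ore_mult \<alpha> Q ?Z"
    by (rule ore_mult_superset[symmetric]) (use kz z in auto)
  finally show "ore_mult \<alpha> ?Z Q = ore_mult \<alpha> Q ?Z" .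
qed



theorem mainTheorem19:
  fixes p e r :: nat
  assumes "prime p" and "e \<ge> 2" and "r \<ge> 2"
    and "CHAR('a::ring_1) = p ^ (r + 1)"
  shows "\<exists>\<alpha> :: 'a upoly \<Rightarrow> 'a upoly.
           R_ring_automorphism \<alpha>
         \<and> \<alpha> pX = pX + of_nat p * pX ^ e
         \<and> \<alpha> ^^ (p ^ r) = id
         \<and> (\<forall>k. 0 < k \<and> k < p ^ r \<longrightarrow> \<alpha> ^^ k \<noteq> id)
         \<and> ore_central \<alpha> (ore_of_poly (pX ^ (p ^ r)))
         \<and> ore_central \<alpha> (Poly_Mapping.single (p ^ r) 1)"
proof -
  note p = assms(1) and e = assms(2) and r = assms(3) and ch = assms(4)
  have e1: "e \<ge> 1" using e by simp
  have p1: "p > 1" using p prime_gt_1_nat by blast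
  define \<alpha> where "\<alpha> = subst (ss p e :: 'a upoly)"
  have add: "\<And>f g. \<alpha> (f + g) = \<alpha> f + \<alpha> g" unfolding \<alpha>_def by (rule subst_add)
  have mult: "\<And>f g. \<alpha> (f * g) = \<alpha> f * \<alpha> g" unfolding \<alpha>_def by (rule subst_mult[OF central_ss])
  have scal: "\<And>c f. \<alpha> (of_nat c * f) = of_nat c * \<alpha> f" unfolding \<alpha>_def by (rule subst_of_nat_mult[OF central_ss])
  have dv: "\<And>f. \<exists>g. \<alpha> f - f = of_nat p * g" unfolding \<alpha>_def by (rule D3[OF e1])
  have ch0: "of_nat (p ^ (r + 1)) = (0 :: 'a)" unfolding of_nat_eq_0_iff_char_dvd ch by simp
  have chU: "of_nat (p ^ (r + 1)) = (0 :: 'a upoly)"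
    using ch0 by (simp flip: pC_of_nat add: pC_def)
  have per: "\<alpha> ^^ (p ^ r) = id"
    using period_op[OF p add scal dv chU] by auto
  have z: "\<And>m. (\<alpha> ^^ m) 0 = 0"
  proof -
    fix m show "(\<alpha> ^^ m) 0 = 0" by (induction m) (simp_all add: \<alpha>_def)
  qed
  have bij: "bij \<alpha>"
  proof (rule o_bij)
    have pr: "p ^ r = Suc (p ^ r - 1)" using p1 by simp
    have "\<alpha> ^^ (p ^ r) = \<alpha> ^^ (p ^ r - 1) \<circ> \<alpha>" by (subst pr) (rule funpow_Suc_right)
    then show "\<alpha> ^^ (p ^ r - 1) \<circ> \<alpha> = id" using per by simp
    have "\<alpha> ^^ (p ^ r) = \<alpha> \<circ> \<alpha> ^^ (p ^ r - 1)" by (subst pr) simp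
    then show "\<alpha> \<circ> \<alpha> ^^ (p ^ r - 1) = id" using per by simp
  qed
  have aut: "R_ring_automorphism \<alpha>"
    unfolding R_ring_automorphism_def using bij add mult by (simp add: \<alpha>_def)
  have apX: "\<alpha> pX = pX + of_nat p * pX ^ e" by (simp add: \<alpha>_def ss_def)
  have nz: "of_nat (p ^ r) \<noteq> (0 :: 'a)"
  proof
    assume "of_nat (p ^ r) = (0 :: 'a)"
    hence "p ^ (r + 1) dvd p ^ r" unfolding of_nat_eq_0_iff_char_dvd ch .
    moreover have "p ^ r < p ^ (r + 1)" using p1 by simp
    moreover have "p ^ r > 0" using p1 by simp
    ultimately show False using dvd_imp_le by fastforce
  qed
  have notid: "\<alpha> ^^ (p ^ (r - 1)) \<noteq> id"
  proof
    assume a: "\<alpha> ^^ (p ^ (r - 1)) = id"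
    have "Poly_Mapping.lookup ((\<alpha> ^^ (p ^ (r - 1))) pX) e = of_nat (p ^ (r - 1)) * of_nat p"
      unfolding \<alpha>_def by (rule coef_lemma[OF e])
    also have "\<dots> = of_nat (p ^ r)"
      using r by (simp flip: of_nat_mult add: power_Suc2[symmetric])
    finally have "Poly_Mapping.lookup ((\<alpha> ^^ (p ^ (r - 1))) pX) e = of_nat (p ^ r)" .
    moreover have "Poly_Mapping.lookup (pX :: 'a upoly) e = 0" using e by (simp add: pX_def lookup_single)
    ultimately show False using a nz by simp
  qed
  have nonid: "\<forall>k. 0 < k \<and> k < p ^ r \<longrightarrow> \<alpha> ^^ k \<noteq> id"
  proof (intro allI impI notI)
    fix k assume k: "0 < k \<and> k < p ^ r" and ak: "\<alpha> ^^ k = id"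
    have idm: "\<And>m q. \<alpha> ^^ m = id \<Longrightarrow> \<alpha> ^^ (m * q) = id"
      by (metis funpow_mult id_funpow)
    obtain u v where uv: "k * u = p ^ r * v + gcd k (p ^ r)"
      using bezout_nat[of k "p ^ r"] k by auto
    have "\<alpha> ^^ (k * u) = id" using idm ak by blast
    moreover have "\<alpha> ^^ (k * u) = \<alpha> ^^ (gcd k (p ^ r)) \<circ> \<alpha> ^^ (p ^ r * v)"
      by (simp add: uv funpow_add add.commute)
    moreover have "\<alpha> ^^ (p ^ r * v) = id" using idm per by blast
    ultimately have ag: "\<alpha> ^^ (gcd k (p ^ r)) = id" by simp
    obtain i where i: "i \<le> r" "gcd k (p ^ r) = p ^ i"
      using divides_primepow_nat[OF p] gcd_dvd2 by blast
    have "p ^ i \<le> k" using i k by (metis gcd_le1_nat not_gr_zero)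
    hence "p ^ i < p ^ r" using k by simp
    hence "i < r" using p1 by (simp add: power_strict_increasing_iff)
    hence ex: "p ^ (r - 1) = p ^ i * p ^ (r - 1 - i)" by (simp add: power_add[symmetric])
    have "\<alpha> ^^ (p ^ (r - 1)) = id" unfolding ex using idm ag i by metis
    with notid show False by simp
  qed
  have tN: "(tt p e :: 'a upoly) ^ (p ^ r) = 1"
  proof -
    let ?\<beta> = "\<lambda>f. tt p e * (f :: 'a upoly)"
    have "(?\<beta> ^^ (p ^ r)) 1 = 1"
    proof (rule period_op[OF p _ _ _ chU])
      show "\<And>f g. ?\<beta> (f + g) = ?\<beta> f + ?\<beta> g" by (simp add: distrib_left)
      show "\<And>c f. ?\<beta> (of_nat c * f) = of_nat c * ?\<beta> f"
        by (simp only: mult.assoc[symmetric] mult_of_nat_commute[of _ "tt p e"])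
      show "\<And>f. \<exists>g. ?\<beta> f - f = of_nat p * g"
        by (rule exI, simp add: tt_def distrib_right mult.assoc)
    qed
    then show ?thesis by (simp add: funpow_mult_left)
  qed
  have fixX: "\<alpha> (pX ^ (p ^ r)) = pX ^ (p ^ r)"
  proof -
    have "\<alpha> (pX ^ (p ^ r)) = ss p e ^ (p ^ r)" by (simp add: \<alpha>_def subst_power[OF central_ss])
    also have "\<dots> = pX ^ (p ^ r) * tt p e ^ (p ^ r)"
    proof -
      have cp: "central (pX :: 'a upoly)" using central_pXpow[of 1] by simp
      show ?thesis unfolding ss_eq[OF e1] by (rule central_power_mult[OF cp])
    qed
    finally show ?thesis using tN by simp
  qed
  have fixXm: "\<And>m. (\<alpha> ^^ m) (pX ^ (p ^ r)) = pX ^ (p ^ r)"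
  proof -
    fix m show "(\<alpha> ^^ m) (pX ^ (p ^ r)) = pX ^ (p ^ r)" by (induction m) (simp_all add: fixX)
  qed
  have fix1: "\<And>m. (\<alpha> ^^ m) 1 = 1"
  proof -
    fix m show "(\<alpha> ^^ m) 1 = 1" by (induction m) (simp_all add: \<alpha>_def)
  qed
  have c1: "ore_central \<alpha> (ore_of_poly (pX ^ (p ^ r)))"
    unfolding ore_of_poly_def by (rule ore_central_single[OF central_pXpow fixXm _ z]) simp
  have c2: "ore_central \<alpha> (Poly_Mapping.single (p ^ r) 1)"
    by (rule ore_central_single[OF central_1 fix1 per z])
  show ?thesis using aut apX per nonid c1 c2 by blast
qed

end
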